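(* Let $\mathbf{e}\in\mathbb{P}\mathrm{iez}$, let $\mathbf{h}$ be its leading harmonic part, $\mathbf{g}=\mathbf{e}-\mathbf{h}$, and $\mathbf{d}_2'=\mathbf{d}_2-\frac13\operatorname{tr}(\mathbf{d}_2)\mathbf{q}$ where $(\mathbf{d}_2)_{ij}=h_{ikl}h_{klj}$. Then $\mathbf{e}\in\overline{\Sigma}_{[\mathbb{O}^-]}$ (i.e. $\mathbf{e}$ has at least cubic symmetry) if and only if $\mathbf{g}=0$ and $\mathbf{d}_2'=0$. Moreover, $\mathbf{e}\in\Sigma_{[\mathbb{O}^-]}$ (i.e. the symmetry group of $\mathbf{e}$ is conjugate in $\mathrm{O}(3)$ to $\mathbb{O}^-$) if and only if $\mathbf{g}=0$, $\mathbf{d}_2'=0$ and $\mathbf{h}\neq 0$.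
   Context: $\mathbb{P}\mathrm{iez}=\{\mathbf{e}\in\otimes^3\mathbb{R}^3: \mathrm{e}_{ijk}=\mathrm{e}_{ikj}\}$ (components in an orthonormal basis), with $\mathrm{O}(3)$-action $(g\cdot\mathbf{e})_{ijk}=g_{ia}g_{jb}g_{kc}\mathrm{e}_{abc}$ and norm $\|\mathbf{e}\|^2=\mathrm{e}_{ijk}\mathrm{e}_{ijk}$. $\mathbf{q}=(\delta_{ij})$. Totally symmetric part: $(\mathbf{e}^s)_{ijk}=\frac13(\mathrm{e}_{ijk}+\mathrm{e}_{jik}+\mathrm{e}_{kji})$; its trace is the vector $u_i=(\mathbf{e}^s)_{ikk}$; $(\mathbf{q}\odot\mathbf{u})_{ijk}=\frac13(\delta_{ij}u_k+\delta_{ik}u_j+\delta_{jk}u_i)$. The leading harmonic part of $\mathbf{e}$ is $\mathbf{h}=\mathbf{e}^s-\frac35\,\mathbf{q}\odot\mathbf{u}$, a totally symmetric traceless third-order tensor. $\mathbb{O}^-\subset\mathrm{O}(3)$ is the group of all orthogonal transformations preserving the regular tetrahedron with vertices $(1,1,1),(1,-1,-1),(-1,1,-1),(-1,-1,1)$ (order 24; notation of Golubitsky–Stewart–Schaeffer). Symmetry group: $G_{\mathbf{e}}=\{g\in\mathrm{O}(3): g\cdot\mathbf{e}=\mathbf{e}\}$. $\overline{\Sigma}_{[\mathbb{O}^-]}=\{\mathbf{e}:\exists g\in\mathrm{O}(3),\ g\mathbb{O}^-g^{-1}\subset G_{\mathbf{e}}\}$ and $\Sigma_{[\mathbb{O}^-]}=\{\mathbf{e}: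 G_{\mathbf{e}}=g\mathbb{O}^-g^{-1}\text{ for some }g\in\mathrm{O}(3)\}$. *)

theory Defs
  imports "HOL-Analysis.Analysis"
begin

text \<open>Third-order tensors on R^3, components in an orthonormal basis:
  e $ i $ j $ k = e_ijk, indices in the 3-element type 3.\<close>

type_synonym tensor3 = "real^3^3^3"
type_synonym tensor2 = "real^3^3"

definition Piez :: "tensor3 set" where
  "Piez = {e. \<forall>i j k. e $ i $ j $ k = e $ i $ k $ j}"

definition kdelta :: "3 \<Rightarrow> 3 \<Rightarrow> real" where
  "kdelta i j = (if i = j then 1 else 0)"

definition O3 :: "tensor2 set" where
  "O3 = {g. orthogonal_matrix g}"

definition act :: "tensor2 \<Rightarrow> tensor3 \<Rightarrow> tensor3" where
  "act g e = (\<chi> i j k. \<Sum>a\<in>UNIV. \<Sum>b\<in>UNIV. \<Sum>c\<in>UNIV.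
                 g $ i $ a * g $ j $ b * g $ k $ c * e $ a $ b $ c)"

definition sym_part :: "tensor3 \<Rightarrow> tensor3" where
  "sym_part e = (\<chi> i j k. (e $ i $ j $ k + e $ j $ i $ k + e $ k $ j $ i) / 3)"

definition trace_vec :: "tensor3 \<Rightarrow> real^3" where
  "trace_vec e = (\<chi> i. \<Sum>k\<in>UNIV. sym_part e $ i $ k $ k)"

definition q_odot :: "real^3 \<Rightarrow> tensor3" where
  "q_odot u = (\<chi> i j k. (kdelta i j * u $ k + kdelta i k * u $ j + kdelta j k * u $ i) / 3)"

definition harm :: "tensor3 \<Rightarrow> tensor3" where
  "harm e = sym_part e - (3/5) *\<^sub>R q_odot (trace_vec e)"

definition d2 :: "tensor3 \<Rightarrow> tensor2" where
  "d2 h = (\<chi> i j. \<Sum>k\<in>UNIV. \<Sum>l\<in>UNIV. h $ i $ k $ l * h $ k $ l $ j)"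

definition tr2 :: "tensor2 \<Rightarrow> real" where
  "tr2 m = (\<Sum>i\<in>UNIV. m $ i $ i)"

definition dev :: "tensor2 \<Rightarrow> tensor2" where
  "dev m = m - (tr2 m / 3) *\<^sub>R (\<chi> i j. kdelta i j)"

definition tetra :: "(real^3) set" where
  "tetra = {vector [1,1,1], vector [1,-1,-1], vector [-1,1,-1], vector [-1,-1,1]}"

definition Ominus :: "tensor2 set" where
  "Ominus = {g \<in> O3. (\<lambda>v. g *v v) ` tetra = tetra}"

definition sym_group :: "tensor3 \<Rightarrow> tensor2 set" where
  "sym_group e = {g \<in> O3. act g e = e}"

definition conj :: "tensor2 \<Rightarrow> tensor2 set \<Rightarrow> tensor2 set" where
  "conj g H = (\<lambda>h. g ** h ** matrix_inv g) ` H"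

definition Sigma_bar_Ominus :: "tensor3 set" where
  "Sigma_bar_Ominus = {e. \<exists>g\<in>O3. conj g Ominus \<subseteq> sym_group e}"

definition Sigma_Ominus :: "tensor3 set" where
  "Sigma_Ominus = {e. \<exists>g\<in>O3. sym_group e = conj g Ominus}"

end

theory Submission
  imports Defs
begin

lemma move3: "(\<Sum>x\<in>A. \<Sum>y\<in>B. \<Sum>z\<in>C. g x y z) = (\<Sum>z\<in>C. \<Sum>x\<in>A. \<Sum>y\<in>B. g x y z)"
proof -
  have "(\<Sum>x\<in>A. \<Sum>y\<in>B. \<Sum>z\<in>C. g x y z) = (\<Sum>x\<in>A. \<Sum>z\<in>C. \<Sum>y\<in>B. g x y z)"
    by (rule sum.cong[OF refl], rule sum.swap)
  also have "\<dots> = (\<Sum>z\<in>C. \<Sum>x\<in>A. \<Sum>y\<in>B. g x y z)" by (rule sum.swap)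
  finally show ?thesis .
qed
lemma move4: "(\<Sum>x\<in>A. \<Sum>y\<in>B. \<Sum>z\<in>C. \<Sum>w\<in>D. g x y z w) = (\<Sum>w\<in>D. \<Sum>x\<in>A. \<Sum>y\<in>B. \<Sum>z\<in>C. g x y z w)"
proof -
  have "(\<Sum>x\<in>A. \<Sum>y\<in>B. \<Sum>z\<in>C. \<Sum>w\<in>D. g x y z w) = (\<Sum>x\<in>A. \<Sum>w\<in>D. \<Sum>y\<in>B. \<Sum>z\<in>C. g x y z w)"
    by (rule sum.cong[OF refl], rule move3)
  also have "\<dots> = (\<Sum>w\<in>D. \<Sum>x\<in>A. \<Sum>y\<in>B. \<Sum>z\<in>C. g x y z w)" by (rule sum.swap)
  finally show ?thesis .
qed
lemma move5: "(\<Sum>x\<in>A. \<Sum>y\<in>B. \<Sum>z\<in>C. \<Sum>w\<in>D. \<Sum>v\<in>E. g x y z w v) = (\<Sum>v\<in>E. \<Sum>x\<in>A. \<Sum>y\<in>B. \<Sum>z\<in>C. \<Sum>w\<in>D. g x y z w v)"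
proof -
  have "(\<Sum>x\<in>A. \<Sum>y\<in>B. \<Sum>z\<in>C. \<Sum>w\<in>D. \<Sum>v\<in>E. g x y z w v) = (\<Sum>x\<in>A. \<Sum>v\<in>E. \<Sum>y\<in>B. \<Sum>z\<in>C. \<Sum>w\<in>D. g x y z w v)"
    by (rule sum.cong[OF refl], rule move4)
  also have "\<dots> = (\<Sum>v\<in>E. \<Sum>x\<in>A. \<Sum>y\<in>B. \<Sum>z\<in>C. \<Sum>w\<in>D. g x y z w v)" by (rule sum.swap)
  finally show ?thesis .
qed
lemma move6: "(\<Sum>x\<in>A. \<Sum>y\<in>B. \<Sum>z\<in>C. \<Sum>w\<in>D. \<Sum>v\<in>E. \<Sum>u\<in>F. g x y z w v u) = (\<Sum>u\<in>F. \<Sum>x\<in>A. \<Sum>y\<in>B. \<Sum>z\<in>C. \<Sum>w\<in>D. \<Sum>v\<in>E. g x y z w v u)"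
proof -
  have "(\<Sum>x\<in>A. \<Sum>y\<in>B. \<Sum>z\<in>C. \<Sum>w\<in>D. \<Sum>v\<in>E. \<Sum>u\<in>F. g x y z w v u) = (\<Sum>x\<in>A. \<Sum>u\<in>F. \<Sum>y\<in>B. \<Sum>z\<in>C. \<Sum>w\<in>D. \<Sum>v\<in>E. g x y z w v u)"
    by (rule sum.cong[OF refl], rule move5)
  also have "\<dots> = (\<Sum>u\<in>F. \<Sum>x\<in>A. \<Sum>y\<in>B. \<Sum>z\<in>C. \<Sum>w\<in>D. \<Sum>v\<in>E. g x y z w v u)" by (rule sum.swap)
  finally show ?thesis .
qed
lemma rev6: "(\<Sum>a\<in>U. \<Sum>b\<in>U. \<Sum>c\<in>U. \<Sum>n\<in>U. \<Sum>na\<in>U. \<Sum>nb\<in>U. F a b c n na nb) = (\<Sum>nb\<in>U. \<Sum>na\<in>U. \<Sum>n\<in>U. \<Sum>a\<in>U. \<Sum>b\<in>U. \<Sum>c\<in>U. F a b c n na nb)"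
proof -
  have "(\<Sum>a\<in>U. \<Sum>b\<in>U. \<Sum>c\<in>U. \<Sum>n\<in>U. \<Sum>na\<in>U. \<Sum>nb\<in>U. F a b c n na nb) = (\<Sum>nb\<in>U. \<Sum>a\<in>U. \<Sum>b\<in>U. \<Sum>c\<in>U. \<Sum>n\<in>U. \<Sum>na\<in>U. F a b c n na nb)"
    by (rule move6)
  also have "\<dots> = (\<Sum>nb\<in>U. \<Sum>na\<in>U. \<Sum>a\<in>U. \<Sum>b\<in>U. \<Sum>c\<in>U. \<Sum>n\<in>U. F a b c n na nb)"
    by (rule sum.cong[OF refl], rule move5)
  also have "\<dots> = (\<Sum>nb\<in>U. \<Sum>na\<in>U. \<Sum>n\<in>U. \<Sum>a\<in>U. \<Sum>b\<in>U. \<Sum>c\<in>U. F a b c n na nb)"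
    by (rule sum.cong[OF refl], rule sum.cong[OF refl], rule move4)
  finally show ?thesis .
qed
lemma perm6: "(\<Sum>y1\<in>U. \<Sum>y2\<in>U. \<Sum>y3\<in>U. \<Sum>y4\<in>U. \<Sum>y5\<in>U. \<Sum>y6\<in>U. G y5 y4 y6 y1 y2 y3) = (\<Sum>y5\<in>U. \<Sum>y4\<in>U. \<Sum>y6\<in>U. \<Sum>y1\<in>U. \<Sum>y2\<in>U. \<Sum>y3\<in>U. G y5 y4 y6 y1 y2 y3)"
proof -
  have "(\<Sum>y1\<in>U. \<Sum>y2\<in>U. \<Sum>y3\<in>U. \<Sum>y4\<in>U. \<Sum>y5\<in>U. \<Sum>y6\<in>U. G y5 y4 y6 y1 y2 y3) = (\<Sum>y1\<in>U. \<Sum>y2\<in>U. \<Sum>y3\<in>U. \<Sum>y4\<in>U. \<Sum>y6\<in>U. \<Sum>y5\<in>U. G y5 y4 y6 y1 y2 y3)"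
    by (rule sum.cong[OF refl], rule sum.cong[OF refl], rule sum.cong[OF refl], rule sum.cong[OF refl], rule sum.swap)
  also have "\<dots> = (\<Sum>y5\<in>U. \<Sum>y1\<in>U. \<Sum>y2\<in>U. \<Sum>y3\<in>U. \<Sum>y4\<in>U. \<Sum>y6\<in>U. G y5 y4 y6 y1 y2 y3)" by (rule move6)
  also have "\<dots> = (\<Sum>y5\<in>U. \<Sum>y1\<in>U. \<Sum>y2\<in>U. \<Sum>y3\<in>U. \<Sum>y6\<in>U. \<Sum>y4\<in>U. G y5 y4 y6 y1 y2 y3)"
    by (rule sum.cong[OF refl], rule sum.cong[OF refl], rule sum.cong[OF refl], rule sum.cong[OF refl], rule sum.swap)
  also have "\<dots> = (\<Sum>y5\<in>U. \<Sum>y4\<in>U. \<Sum>y1\<in>U. \<Sum>y2\<in>U. \<Sum>y3\<in>U. \<Sum>y6\<in>U. G y5 y4 y6 y1 y2 y3)"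
    by (rule sum.cong[OF refl], rule move5)
  also have "\<dots> = (\<Sum>y5\<in>U. \<Sum>y4\<in>U. \<Sum>y6\<in>U. \<Sum>y1\<in>U. \<Sum>y2\<in>U. \<Sum>y3\<in>U. G y5 y4 y6 y1 y2 y3)"
    by (rule sum.cong[OF refl], rule sum.cong[OF refl], rule move4)
  finally show ?thesis .
qed

lemma act_mult: "act (A ** B) e = act A (act B e)"
proof -
  { fix i j k
    have "act (A ** B) e $i$j$k = act A (act B e) $i$j$k"
      unfolding act_def apply (simp add: matrix_matrix_mult_def sum_distrib_left sum_distrib_right mult_ac)
      apply (subst perm6[symmetric, where G="\<lambda>x1 x2 x3 x4 x5 x6. A$i$x1 * (A$j$x2 * (A$k$x3 * (B$x1$x4 * (B$x2$x5 * (B$x3$x6 * e$x4$x5$x6)))))"]) by (simp add: mult_ac) }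
  then show ?thesis by (simp add: vec_eq_iff)
qed

lemma moveIn1: "(\<Sum>k\<in>K. \<Sum>a\<in>A. F k a) = (\<Sum>a\<in>A. \<Sum>k\<in>K. F k a)"
  by (rule sum.swap)
lemma moveIn2: "(\<Sum>k\<in>K. \<Sum>a\<in>A. \<Sum>b\<in>B. F k a b) = (\<Sum>a\<in>A. \<Sum>b\<in>B. \<Sum>k\<in>K. F k a b)"
  by (rule trans[OF sum.swap], rule sum.cong[OF refl], rule moveIn1)
lemma moveIn3: "(\<Sum>k\<in>K. \<Sum>a\<in>A. \<Sum>b\<in>B. \<Sum>c\<in>C. F k a b c) = (\<Sum>a\<in>A. \<Sum>b\<in>B. \<Sum>c\<in>C. \<Sum>k\<in>K. F k a b c)"
  by (rule trans[OF sum.swap], rule sum.cong[OF refl], rule moveIn2)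
lemma moveIn4: "(\<Sum>k\<in>K. \<Sum>a\<in>A. \<Sum>b\<in>B. \<Sum>c\<in>C. \<Sum>d\<in>D. F k a b c d) = (\<Sum>a\<in>A. \<Sum>b\<in>B. \<Sum>c\<in>C. \<Sum>d\<in>D. \<Sum>k\<in>K. F k a b c d)"
  by (rule trans[OF sum.swap], rule sum.cong[OF refl], rule moveIn3)
lemma moveIn5: "(\<Sum>k\<in>K. \<Sum>a\<in>A. \<Sum>b\<in>B. \<Sum>c\<in>C. \<Sum>d\<in>D. \<Sum>e\<in>E. F k a b c d e) = (\<Sum>a\<in>A. \<Sum>b\<in>B. \<Sum>c\<in>C. \<Sum>d\<in>D. \<Sum>e\<in>E. \<Sum>k\<in>K. F k a b c d e)"
  by (rule trans[OF sum.swap], rule sum.cong[OF refl], rule moveIn4)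
lemma moveIn6: "(\<Sum>k\<in>K. \<Sum>a\<in>A. \<Sum>b\<in>B. \<Sum>c\<in>C. \<Sum>d\<in>D. \<Sum>e\<in>E. \<Sum>f\<in>FF. F k a b c d e f) = (\<Sum>a\<in>A. \<Sum>b\<in>B. \<Sum>c\<in>C. \<Sum>d\<in>D. \<Sum>e\<in>E. \<Sum>f\<in>FF. \<Sum>k\<in>K. F k a b c d e f)"
  by (rule trans[OF sum.swap], rule sum.cong[OF refl], rule moveIn5)

definition tr3 :: "tensor3 \<Rightarrow> real^3" where "tr3 X = (\<chi> i. \<Sum>k\<in>UNIV. X$i$k$k)"
definition tsym :: "tensor3 \<Rightarrow> bool" where
  "tsym X \<longleftrightarrow> (\<forall>i j k. X$i$j$k = X$j$i$k \<and> X$i$j$k = X$i$k$j)"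

lemma O3_orth: assumes "g \<in> O3" shows "transpose g ** g = mat 1" "g ** transpose g = mat 1"
  using assms by (auto simp: O3_def orthogonal_matrix_def)

lemma orth_comp: assumes "g \<in> O3" shows "(\<Sum>k\<in>UNIV. g$k$b * g$k$c) = (if b = c then 1 else 0)"
proof -
  have "(transpose g ** g)$b$c = mat 1 $b$c" using O3_orth[OF assms] by simp
  then show ?thesis by (simp add: matrix_matrix_mult_def transpose_def mat_def)
qed
lemma orth_comp2: assumes "g \<in> O3" shows "(\<Sum>k\<in>UNIV. g$b$k * g$c$k) = (if b = c then 1 else 0)"
proof -
  have "(g ** transpose g)$b$c = mat 1 $b$c" using O3_orth[OF assms] by simp
  then show ?thesis by (simp add: matrix_matrix_mult_def transpose_def mat_def)
qed

lemma tr3_act: assumes "g \<in> O3" shows "tr3 (act g X) = g *v tr3 X"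
proof -
  { fix i
    have "tr3 (act g X) $ i = (\<Sum>k\<in>UNIV. \<Sum>a\<in>UNIV. \<Sum>b\<in>UNIV. \<Sum>c\<in>UNIV. g$i$a * g$k$b * g$k$c * X$a$b$c)"
      by (simp add: tr3_def act_def)
    also have "\<dots> = (\<Sum>a\<in>UNIV. \<Sum>b\<in>UNIV. \<Sum>c\<in>UNIV. \<Sum>k\<in>UNIV. g$i$a * g$k$b * g$k$c * X$a$b$c)"
      by (rule moveIn3)
    also have "\<dots> = (\<Sum>a\<in>UNIV. \<Sum>b\<in>UNIV. \<Sum>c\<in>UNIV. g$i$a * X$a$b$c * (\<Sum>k\<in>UNIV. g$k$b * g$k$c))"
      by (simp add: sum_distrib_left mult_ac)
    also have "\<dots> = (\<Sum>a\<in>UNIV. \<Sum>b\<in>UNIV. \<Sum>c\<in>UNIV. g$i$a * X$a$b$c * (if b = c then 1 else 0))"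
      by (simp only: orth_comp[OF assms])
    also have "\<dots> = (g *v tr3 X) $ i"
      by (simp add: tr3_def matrix_vector_mult_def sum_distrib_left if_distrib cong: if_cong)
    finally have "tr3 (act g X) $ i = (g *v tr3 X) $ i" . }
  then show ?thesis by (simp add: vec_eq_iff)
qed

lemma act_sym: assumes "tsym X" shows "tsym (act g X)"
proof -
  { fix i j k
    have "act g X $j$i$k = (\<Sum>a\<in>UNIV. \<Sum>b\<in>UNIV. \<Sum>c\<in>UNIV. g$j$a * g$i$b * g$k$c * X$a$b$c)"
      by (simp add: act_def)
    also have "\<dots> = (\<Sum>b\<in>UNIV. \<Sum>a\<in>UNIV. \<Sum>c\<in>UNIV. g$j$a * g$i$b * g$k$c * X$a$b$c)"
      by (rule sum.swap)
    also have "\<dots> = act g X $i$j$k"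
      using assms by (simp add: act_def tsym_def mult_ac)
    finally have 1: "act g X $j$i$k = act g X $i$j$k" .
    have "act g X $i$k$j = (\<Sum>a\<in>UNIV. \<Sum>b\<in>UNIV. \<Sum>c\<in>UNIV. g$i$a * g$k$b * g$j$c * X$a$b$c)"
      by (simp add: act_def)
    also have "\<dots> = (\<Sum>a\<in>UNIV. \<Sum>c\<in>UNIV. \<Sum>b\<in>UNIV. g$i$a * g$k$b * g$j$c * X$a$b$c)"
      by (rule sum.cong[OF refl], rule sum.swap)
    also have "\<dots> = act g X $i$j$k"
      using assms by (simp add: act_def tsym_def mult_ac)
    finally have 2: "act g X $i$k$j = act g X $i$j$k" .
    note 1 2 }
  then show ?thesis by (simp add: tsym_def)
qed

lemma delta_sum: "(\<Sum>d\<in>UNIV. (if (b::3) = d then 1 else 0) * G d) = (G b::real)"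
proof -
  have "\<And>d. (if b = d then 1 else 0) * G d = (if b = d then G d else 0)" by simp
  then show ?thesis by (simp add: sum.delta')
qed
lemma delta2: "(\<Sum>d\<in>UNIV. \<Sum>e\<in>UNIV. \<Sum>f\<in>UNIV. F d e f * (if (b::3) = d then 1 else 0) * (if (c::3) = e then 1 else (0::real))) = (\<Sum>f\<in>UNIV. F b c f)"
proof -
  have "(\<Sum>d\<in>UNIV. \<Sum>e\<in>UNIV. \<Sum>f\<in>UNIV. F d e f * (if (b::3) = d then 1 else 0) * (if (c::3) = e then 1 else (0::real)))
    = (\<Sum>d\<in>UNIV. (if b = d then 1 else 0) * (\<Sum>e\<in>UNIV. (if c = e then 1 else 0) * (\<Sum>f\<in>UNIV. F d e f)))"
    by (simp add: sum_distrib_left sum_distrib_right mult_ac)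
  also have "\<dots> = (\<Sum>f\<in>UNIV. F b c f)" by (simp only: delta_sum)
  finally show ?thesis .
qed

lemma d2_act: assumes "g \<in> O3" shows "d2 (act g X) = g ** d2 X ** transpose g"
proof -
  { fix i j
    have "d2 (act g X) $ i $ j = (\<Sum>k\<in>UNIV. \<Sum>l\<in>UNIV. \<Sum>a\<in>UNIV. \<Sum>b\<in>UNIV. \<Sum>c\<in>UNIV. \<Sum>d\<in>UNIV. \<Sum>e\<in>UNIV. \<Sum>f\<in>UNIV.
         (g$i$a * g$k$b * g$l$c * X$a$b$c) * (g$k$d * g$l$e * g$j$f * X$d$e$f))"
      unfolding d2_def act_def apply (simp only: vec_lambda_beta) apply (simp only: sum_distrib_right) by (simp only: sum_distrib_left)
    also have "\<dots> = (\<Sum>k\<in>UNIV. \<Sum>a\<in>UNIV. \<Sum>b\<in>UNIV. \<Sum>c\<in>UNIV. \<Sum>d\<in>UNIV. \<Sum>e\<in>UNIV. \<Sum>f\<in>UNIV. \<Sum>l\<in>UNIV.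
         (g$i$a * g$k$b * g$l$c * X$a$b$c) * (g$k$d * g$l$e * g$j$f * X$d$e$f))"
      by (rule sum.cong[OF refl], rule moveIn6)
    also have "\<dots> = (\<Sum>a\<in>UNIV. \<Sum>b\<in>UNIV. \<Sum>c\<in>UNIV. \<Sum>d\<in>UNIV. \<Sum>e\<in>UNIV. \<Sum>f\<in>UNIV. \<Sum>k\<in>UNIV. \<Sum>l\<in>UNIV.
         (g$i$a * g$k$b * g$l$c * X$a$b$c) * (g$k$d * g$l$e * g$j$f * X$d$e$f))"
      by (rule moveIn6)
    also have "\<dots> = (\<Sum>a\<in>UNIV. \<Sum>b\<in>UNIV. \<Sum>c\<in>UNIV. \<Sum>d\<in>UNIV. \<Sum>e\<in>UNIV. \<Sum>f\<in>UNIV.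
         g$i$a * g$j$f * X$a$b$c * X$d$e$f * (\<Sum>k\<in>UNIV. g$k$b * g$k$d) * (\<Sum>l\<in>UNIV. g$l$c * g$l$e))"
      by (simp add: sum_distrib_left sum_distrib_right mult_ac)
    also have "\<dots> = (\<Sum>a\<in>UNIV. \<Sum>b\<in>UNIV. \<Sum>c\<in>UNIV. \<Sum>d\<in>UNIV. \<Sum>e\<in>UNIV. \<Sum>f\<in>UNIV.
         g$i$a * g$j$f * X$a$b$c * X$d$e$f * (if b = d then 1 else 0) * (if c = e then 1 else 0))"
      by (simp only: orth_comp[OF assms])
    also have "\<dots> = (\<Sum>a\<in>UNIV. \<Sum>b\<in>UNIV. \<Sum>c\<in>UNIV. \<Sum>f\<in>UNIV. g$i$a * g$j$f * X$a$b$c * X$b$c$f)"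
      by (rule sum.cong[OF refl], rule sum.cong[OF refl], rule sum.cong[OF refl], rule delta2)
    also have "\<dots> = (\<Sum>f\<in>UNIV. \<Sum>a\<in>UNIV. \<Sum>b\<in>UNIV. \<Sum>c\<in>UNIV. g$i$a * g$j$f * X$a$b$c * X$b$c$f)"
      by (rule moveIn3[symmetric])
    also have "\<dots> = (g ** d2 X ** transpose g) $ i $ j"
      by (simp add: d2_def matrix_matrix_mult_def transpose_def sum_distrib_left sum_distrib_right mult_ac)
    finally have "d2 (act g X) $ i $ j = (g ** d2 X ** transpose g) $ i $ j" . }
  then show ?thesis by (simp add: vec_eq_iff)
qed

lemma act_id: "act (mat 1) X = X"
proof -
  { fix i j k
    have "act (mat 1) X $i$j$k = (\<Sum>a\<in>UNIV. (if i = a then 1 else 0) * (\<Sum>b\<in>UNIV. (if j = b then 1 else 0) * (\<Sum>c\<in>UNIV. (if k = c then 1 else 0) * X$a$b$c)))"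
      by (simp add: act_def mat_def sum_distrib_left mult_ac)
    also have "\<dots> = X$i$j$k" by (simp only: delta_sum)
    finally have "act (mat 1) X $i$j$k = X$i$j$k" . }
  then show ?thesis by (simp add: vec_eq_iff)
qed

lemma act_add: "act g (X + Y) = act g X + act g Y"
  by (simp add: act_def vec_eq_iff algebra_simps sum.distrib)
lemma act_scaleR: "act g (c *\<^sub>R X) = c *\<^sub>R act g X"
  by (simp add: act_def vec_eq_iff sum_distrib_left mult_ac)
lemma act_zero: "act g 0 = 0"
  using act_scaleR[of g 0 X] by simp
lemma act_diff: "act g (X - Y) = act g X - act g Y"
  by (simp add: act_def vec_eq_iff algebra_simps sum_subtractf)
lemma linear_act: "linear (act g)"
  by (rule linearI) (simp_all add: act_add act_scaleR)
lemma act_sum: "act g (sum f S) = (\<Sum>x\<in>S. act g (f x))"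
  by (rule linear_sum[OF linear_act])

definition outer3 :: "real^3 \<Rightarrow> tensor3" where "outer3 v = (\<chi> i j k. v$i * v$j * v$k)"

lemma triple_prod: "(\<Sum>a\<in>A. f a) * (\<Sum>b\<in>B. g b) * (\<Sum>c\<in>C. h c) = (\<Sum>a\<in>A. \<Sum>b\<in>B. \<Sum>c\<in>C. f a * g b * (h c::real))"
proof -
  have "(\<Sum>a\<in>A. f a) * (\<Sum>b\<in>B. g b) * (\<Sum>c\<in>C. h c) = (\<Sum>a\<in>A. f a) * ((\<Sum>b\<in>B. g b) * (\<Sum>c\<in>C. h c))"
    by (rule mult.assoc)
  also have "\<dots> = (\<Sum>a\<in>A. f a) * (\<Sum>b\<in>B. \<Sum>c\<in>C. g b * h c)" by (simp only: sum_product)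
  also have "\<dots> = (\<Sum>a\<in>A. \<Sum>b\<in>B. f a * (\<Sum>c\<in>C. g b * h c))" by (rule sum_product)
  also have "\<dots> = (\<Sum>a\<in>A. \<Sum>b\<in>B. \<Sum>c\<in>C. f a * g b * h c)" by (simp add: sum_distrib_left mult.assoc)
  finally show ?thesis .
qed

lemma act_outer3: "act g (outer3 v) = outer3 (g *v v)"
proof -
  { fix i j k
    have "act g (outer3 v) $i$j$k = (\<Sum>a\<in>UNIV. \<Sum>b\<in>UNIV. \<Sum>c\<in>UNIV. g$i$a * g$j$b * g$k$c * (v$a * v$b * v$c))"
      by (simp add: act_def outer3_def)
    also have "\<dots> = (\<Sum>a\<in>UNIV. \<Sum>b\<in>UNIV. \<Sum>c\<in>UNIV. (g$i$a * v$a) * (g$j$b * v$b) * (g$k$c * v$c))"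
      by (simp add: mult_ac)
    also have "\<dots> = (\<Sum>a\<in>UNIV. g$i$a * v$a) * (\<Sum>b\<in>UNIV. g$j$b * v$b) * (\<Sum>c\<in>UNIV. g$k$c * v$c)"
      by (rule triple_prod[symmetric])
    also have "\<dots> = outer3 (g *v v) $i$j$k"
      by (simp add: outer3_def matrix_vector_mult_def)
    finally have "act g (outer3 v) $i$j$k = outer3 (g *v v) $i$j$k" . }
  then show ?thesis by (simp add: vec_eq_iff)
qed

lemma O3_transpose: "g \<in> O3 \<Longrightarrow> transpose g \<in> O3"
  by (simp add: O3_def)
lemma O3_mult: "g \<in> O3 \<Longrightarrow> h \<in> O3 \<Longrightarrow> g ** h \<in> O3"
  by (simp add: O3_def orthogonal_matrix_mul)
lemma O3_id: "mat 1 \<in> O3"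
  by (simp add: O3_def orthogonal_matrix_id)

lemma O3_inv: assumes "g \<in> O3" shows "matrix_inv g = transpose g"
proof -
  have o: "transpose g ** g = mat 1" "g ** transpose g = mat 1" using O3_orth[OF assms] by auto
  show ?thesis unfolding matrix_inv_def
  proof (rule some_equality)
    show "g ** transpose g = mat 1 \<and> transpose g ** g = mat 1" using o by simp
  next
    fix A' assume "g ** A' = mat 1 \<and> A' ** g = mat 1"
    then have "A' = (transpose g ** g) ** A'" using o by (simp add: matrix_mul_lid)
    also have "\<dots> = transpose g" using \<open>g ** A' = mat 1 \<and> A' ** g = mat 1\<close>
      by (simp add: matrix_mul_assoc[symmetric] matrix_mul_rid)
    finally show "A' = transpose g" .
  qed
qed

lemma act_inv1: "g \<in> O3 \<Longrightarrow> act (transpose g) (act g X) = X"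
  by (simp add: act_mult[symmetric] O3_orth act_id)
lemma act_inv2: "g \<in> O3 \<Longrightarrow> act g (act (transpose g) X) = X"
  by (simp add: act_mult[symmetric] O3_orth act_id)

lemma O3_norm: assumes "g \<in> O3" shows "norm (g *v x) = norm x"
proof -
  have "orthogonal_transformation (\<lambda>x. g *v x)"
    using assms by (simp add: O3_def orthogonal_transformation_matrix matrix_vector_mul_linear)
  then show ?thesis by (simp add: orthogonal_transformation)
qed

definition cub :: "tensor3 \<Rightarrow> real^3 \<Rightarrow> real" where
  "cub X x = (\<Sum>a\<in>UNIV. \<Sum>b\<in>UNIV. \<Sum>c\<in>UNIV. X$a$b$c * x$a * x$b * x$c)"

lemma cub_scale: "cub X (t *\<^sub>R x) = t^3 * cub X x"
  by (simp add: cub_def sum_distrib_left power3_eq_cube mult_ac)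

lemma cub_act: "cub (act g X) x = cub X (transpose g *v x)"
proof -
  have "cub (act g X) x = (\<Sum>i\<in>UNIV. \<Sum>j\<in>UNIV. \<Sum>k\<in>UNIV. \<Sum>a\<in>UNIV. \<Sum>b\<in>UNIV. \<Sum>c\<in>UNIV.
      g$i$a * g$j$b * g$k$c * X$a$b$c * x$i * x$j * x$k)"
    by (simp add: cub_def act_def sum_distrib_right)
  also have "\<dots> = (\<Sum>a\<in>UNIV. \<Sum>b\<in>UNIV. \<Sum>c\<in>UNIV. \<Sum>i\<in>UNIV. \<Sum>j\<in>UNIV. \<Sum>k\<in>UNIV.
      g$i$a * g$j$b * g$k$c * X$a$b$c * x$i * x$j * x$k)"
    apply (rule trans[OF moveIn5]) apply (rule trans[OF moveIn5]) by (rule moveIn5)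
  also have "\<dots> = cub X (transpose g *v x)"
    unfolding cub_def matrix_vector_mult_def transpose_def
    apply (simp only: vec_lambda_beta)
    apply (rule sum.cong[OF refl])+
    by (simp add: sum_distrib_left sum_distrib_right mult_ac)
  finally show ?thesis .
qed

lemma "(1::3) \<noteq> 2 \<and> (1::3) \<noteq> 3 \<and> (2::3) \<noteq> 3" by simp
definition T0 :: tensor3 where "T0 = (\<chi> i j k. if i \<noteq> j \<and> j \<noteq> k \<and> i \<noteq> k then 1 else 0)"

lemma T0_sym: "tsym T0" by (auto simp: tsym_def T0_def)
lemma T0_tr: "tr3 T0 = 0" by (simp add: tr3_def T0_def vec_eq_iff)
lemma T0_d2: "d2 T0 = 2 *\<^sub>R mat 1"
  unfolding vec_eq_iff
proof (intro allI)
  fix i j :: 3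
  show "d2 T0 $ i $ j = (2 *\<^sub>R mat 1) $ i $ j"
    using exhaust_3[of i] exhaust_3[of j] by (auto simp: d2_def T0_def mat_def sum_3)
qed
lemma T0_cub: "cub T0 x = 6 * (x$1 * x$2 * x$3)"
  by (simp add: cub_def T0_def sum_3)

lemma vector3_eq: "(vector [a,b,c] :: real^3) = vector [d,e,f] \<longleftrightarrow> a = d \<and> b = e \<and> c = f"
  by (auto simp: vec_eq_iff forall_3)

lemma norm3_sq: "norm (v::real^3) ^ 2 = (v$1)^2 + (v$2)^2 + (v$3)^2"
  by (simp only: power2_norm_eq_inner) (simp add: inner_vec_def sum_3 power2_eq_square)

lemma vec3_eta: "(v::real^3) = vector [v$1, v$2, v$3]"
  by (simp add: vec_eq_iff forall_3)

lemma tetra_char: "v \<in> tetra \<longleftrightarrow> (v$1)^2 = 1 \<and> (v$2)^2 = 1 \<and> (v$3)^2 = 1 \<and> v$1 * v$2 * v$3 = 1"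
proof
  assume "v \<in> tetra" then show "(v$1)^2 = 1 \<and> (v$2)^2 = 1 \<and> (v$3)^2 = 1 \<and> v$1 * v$2 * v$3 = 1"
    by (auto simp: tetra_def)
next
  assume h: "(v$1)^2 = 1 \<and> (v$2)^2 = 1 \<and> (v$3)^2 = 1 \<and> v$1 * v$2 * v$3 = 1"
  then have a: "v$1 = 1 \<or> v$1 = -1" "v$2 = 1 \<or> v$2 = -1" "v$3 = 1 \<or> v$3 = -1"
    by (auto simp: power2_eq_1_iff)
  from a show "v \<in> tetra" unfolding tetra_def
    apply (elim disjE)
    using h by (auto simp: vec_eq_iff forall_3)
qed

lemma amgm3: fixes x y z :: real assumes "x^2 + y^2 + z^2 = 3" "x*y*z = 1"
  shows "x^2 = 1 \<and> y^2 = 1 \<and> z^2 = 1"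
proof -
  define a b c where "a = x^2" "b = y^2" "c = z^2"
  have nn: "a \<ge> 0" "b \<ge> 0" "c \<ge> 0" by (auto simp: a_b_c_def)
  have s: "a + b + c = 3" using assms a_b_c_def by simp
  have p: "a*b*c = 1" using assms(2) unfolding a_b_c_def by (metis power_mult_distrib one_power2)
  define e where "e = a*b + b*c + c*a"
  have e0: "e \<ge> 0" using nn by (simp add: e_def)
  have i1: "(a-b)^2 + (b-c)^2 + (c-a)^2 = 2*(a+b+c)^2 - 6*e" by (simp add: e_def power2_eq_square algebra_simps)
  have "(a+b+c)^2 = 9" using s by simp
  then have i1': "(a-b)^2 + (b-c)^2 + (c-a)^2 = 18 - 6*e" using i1 by simp
  have q: "(a-b)^2 \<ge> 0" "(b-c)^2 \<ge> 0" "(c-a)^2 \<ge> 0" by simp_all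
  have le: "e \<le> 3" using i1' q by linarith
  have i2: "(a*b - b*c)^2 + (b*c - c*a)^2 + (c*a - a*b)^2 = 2*e^2 - 6*(a*b*c)*(a+b+c)"
    by (simp add: e_def power2_eq_square algebra_simps)
  then have i2': "(a*b - b*c)^2 + (b*c - c*a)^2 + (c*a - a*b)^2 = 2*e^2 - 18" using s p by simp
  have "(a*b - b*c)^2 \<ge> 0" "(b*c - c*a)^2 \<ge> 0" "(c*a - a*b)^2 \<ge> 0" by simp_all
  then have "e^2 \<ge> 9" using i2' by linarith
  then have "3^2 \<le> e^2" by simp
  then have "e \<ge> 3" using e0 by (rule power2_le_imp_le)
  with le have "e = 3" by simp
  then have "(a-b)^2 + (b-c)^2 + (c-a)^2 = 0" using i1' by simp
  then have "(a-b)^2 = 0" "(b-c)^2 = 0" using q by linarith+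
  then have "a = b" "b = c" by simp_all
  then show ?thesis using s a_b_c_def by simp
qed

lemma tetra_O3: assumes "g \<in> O3" "\<And>x. cub T0 (g *v x) = cub T0 x" "t \<in> tetra"
  shows "g *v t \<in> tetra"
proof -
  let ?s = "g *v t"
  have "norm ?s ^ 2 = norm t ^ 2" using O3_norm[OF assms(1)] by simp
  then have n: "(?s$1)^2 + (?s$2)^2 + (?s$3)^2 = 3"
    using assms(3) unfolding norm3_sq tetra_def by auto
  have "?s$1 * ?s$2 * ?s$3 = t$1 * t$2 * t$3" using assms(2)[of t] by (simp add: T0_cub)
  also have "\<dots> = 1" using assms(3) tetra_char by blast
  finally have p: "?s$1 * ?s$2 * ?s$3 = 1" .
  show ?thesis using amgm3[OF n p] p tetra_char by blast
qed

lemma stab_T0: assumes "g \<in> O3" "act g T0 = T0" shows "g \<in> Ominus"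
proof -
  have gt: "transpose g \<in> O3" using assms(1) by (rule O3_transpose)
  have a2: "act (transpose g) T0 = T0" using act_inv1[OF assms(1), of T0] assms(2) by simp
  have c1: "cub T0 (g *v x) = cub T0 x" for x
    using cub_act[of "transpose g" T0 x] a2 by simp
  have c2: "cub T0 (transpose g *v x) = cub T0 x" for x
    using cub_act[of g T0 x] assms(2) by simp
  have "(\<lambda>v. g *v v) ` tetra = tetra"
  proof
    show "(\<lambda>v. g *v v) ` tetra \<subseteq> tetra" using tetra_O3[OF assms(1) c1] by blast
  next
    show "tetra \<subseteq> (\<lambda>v. g *v v) ` tetra"
    proof
      fix t assume t: "t \<in> tetra"
      have "transpose g *v t \<in> tetra" using tetra_O3[OF gt c2 t] .
      moreover have "g *v (transpose g *v t) = (g ** transpose g) *v t" by (simp only: matrix_vector_mul_assoc)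
      then have "g *v (transpose g *v t) = t" using O3_orth[OF assms(1)] by simp
      ultimately show "t \<in> (\<lambda>v. g *v v) ` tetra" by (metis image_eqI)
    qed
  qed
  then show ?thesis using assms(1) by (simp add: Ominus_def)
qed

lemma T0_outer: "T0 = (1/4) *\<^sub>R (\<Sum>t\<in>tetra. outer3 t)"
proof -
  have d: "(vector [1,1,1] :: real^3) \<notin> {vector [1,-1,-1], vector [-1,1,-1], vector [-1,-1,1::real]}"
     "(vector [1,-1,-1] :: real^3) \<notin> {vector [-1,1,-1], vector [-1,-1,1::real]}"
     "vector [-1,1,-1] \<noteq> (vector [-1,-1,1::real] :: real^3)"
    by (auto simp: vector3_eq)
  show ?thesis
    unfolding tetra_def using d
    apply (simp add: sum.insert)
    unfolding vec_eq_iff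
    apply (intro allI)
    subgoal for i j k
      using exhaust_3[of i] exhaust_3[of j] exhaust_3[of k]
      by (auto simp: T0_def outer3_def)
    done
qed

lemma inj_O3: assumes "g \<in> O3" shows "inj (\<lambda>v. g *v v)"
proof
  fix x y assume "g *v x = g *v y"
  then have "transpose g *v (g *v x) = transpose g *v (g *v y)" by simp
  then show "x = y" using O3_orth[OF assms] by (simp add: matrix_vector_mul_assoc)
qed

lemma Ominus_stab: assumes "g \<in> Ominus" shows "act g T0 = T0"
proof -
  have g: "g \<in> O3" and im: "(\<lambda>v. g *v v) ` tetra = tetra" using assms by (auto simp: Ominus_def)
  have "act g T0 = (1/4) *\<^sub>R (\<Sum>t\<in>tetra. outer3 (g *v t))"
    by (subst T0_outer) (simp add: act_scaleR act_sum act_outer3)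
  also have "(\<Sum>t\<in>tetra. outer3 (g *v t)) = (\<Sum>s\<in>(\<lambda>v. g *v v) ` tetra. outer3 s)"
    using inj_O3[OF g] by (simp add: sum.reindex inj_on_subset[of _ UNIV])
  finally show ?thesis using im T0_outer by simp
qed

lemma sym_group_act: assumes g: "g \<in> O3" shows "sym_group (act g X) = conj g (sym_group X)"
proof -
  have o: "transpose g ** g = mat 1" "g ** transpose g = mat 1" using O3_orth[OF g] by auto
  have gt: "transpose g \<in> O3" using g by (rule O3_transpose)
  show ?thesis unfolding conj_def O3_inv[OF g]
  proof
    show "sym_group (act g X) \<subseteq> (\<lambda>h. g ** h ** transpose g) ` sym_group X"
    proof
      fix k assume "k \<in> sym_group (act g X)"
      then have k: "k \<in> O3" "act k (act g X) = act g X" by (auto simp: sym_group_def)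
      let ?h = "transpose g ** k ** g"
      have hO: "?h \<in> O3" using k(1) g gt by (simp add: O3_mult)
      have "act ?h X = act (transpose g) (act k (act g X))" by (simp add: act_mult)
      also have "\<dots> = X" using k(2) act_inv1[OF g] by simp
      finally have "?h \<in> sym_group X" using hO by (simp add: sym_group_def)
      moreover have "g ** ?h ** transpose g = k"
        by (simp add: matrix_mul_assoc[symmetric] o matrix_mul_lid) (simp add: matrix_mul_assoc o matrix_mul_rid)
      ultimately show "k \<in> (\<lambda>h. g ** h ** transpose g) ` sym_group X" by (metis image_eqI)
    qed
  next
    show "(\<lambda>h. g ** h ** transpose g) ` sym_group X \<subseteq> sym_group (act g X)"
    proof
      fix k assume "k \<in> (\<lambda>h. g ** h ** transpose g) ` sym_group X"
      then obtain h where h: "h \<in> O3" "act h X = X" and kk: "k = g ** h ** transpose g"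
        by (auto simp: sym_group_def)
      have kO: "k \<in> O3" using kk h(1) g gt by (simp add: O3_mult)
      have "act k (act g X) = act g (act h (act (transpose g) (act g X)))" by (simp add: kk act_mult)
      also have "\<dots> = act g X" using h(2) act_inv1[OF g] by simp
      finally show "k \<in> sym_group (act g X)" using kO by (simp add: sym_group_def)
    qed
  qed
qed

definition spm :: "(3 \<Rightarrow> 3) \<Rightarrow> (3 \<Rightarrow> real) \<Rightarrow> real^3^3" where
  "spm \<sigma> s = (\<chi> i j. if j = \<sigma> i then s i else 0)"

lemma act_spm: "act (spm \<sigma> s) X $i$j$k = s i * s j * s k * X$(\<sigma> i)$(\<sigma> j)$(\<sigma> k)"
proof -
  have e: "\<And>i a. (spm \<sigma> s)$i$a = s i * (if \<sigma> i = a then 1 else 0)" by (auto simp: spm_def)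
  have "act (spm \<sigma> s) X $i$j$k = (\<Sum>a\<in>UNIV. (if \<sigma> i = a then 1 else 0) * (\<Sum>b\<in>UNIV. (if \<sigma> j = b then 1 else 0) * (\<Sum>c\<in>UNIV. (if \<sigma> k = c then 1 else 0) * (s i * s j * s k * X$a$b$c))))"
    unfolding act_def vec_lambda_beta e by (simp add: sum_distrib_left mult_ac)
  also have "\<dots> = s i * s j * s k * X$(\<sigma> i)$(\<sigma> j)$(\<sigma> k)" by (simp only: delta_sum)
  finally show ?thesis .
qed

lemma spm_mulv: "spm \<sigma> s *v v = (\<chi> i. s i * v$(\<sigma> i))"
proof -
  have e: "\<And>i a. (spm \<sigma> s)$i$a = s i * (if \<sigma> i = a then 1 else 0)" by (auto simp: spm_def)
  { fix i
    have "(spm \<sigma> s *v v)$i = (\<Sum>j\<in>UNIV. (if \<sigma> i = j then 1 else 0) * (s i * v$j))"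
      by (simp add: matrix_vector_mult_def e mult_ac)
    also have "\<dots> = s i * v$(\<sigma> i)" by (simp only: delta_sum)
    finally have "(spm \<sigma> s *v v)$i = s i * v$(\<sigma> i)" . }
  then show ?thesis by (simp add: vec_eq_iff)
qed

lemma chi3: "(\<chi> i. f i :: real^3) = vector [f 1, f 2, f 3]"
  by (simp add: vec_eq_iff forall_3)

definition "sD1 = (\<lambda>i::3. if i = 1 then 1 else -1::real)"
definition "sD2 = (\<lambda>i::3. if i = 2 then 1 else -1::real)"
definition "cyc = (\<lambda>i::3. if i = 1 then 2 else if i = 2 then 3 else 1::3)"
definition "swp = (\<lambda>i::3. if i = 1 then 2 else if i = 2 then 1 else 3::3)"

lemma spm_O3_gen: assumes "\<And>i j::3. (\<Sum>k\<in>UNIV. spm \<sigma> s $k$i * spm \<sigma> s $k$j) = (if i = j then 1 else 0)"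
  shows "spm \<sigma> s \<in> O3"
  unfolding O3_def orthogonal_matrix
  using assms by (simp add: vec_eq_iff matrix_matrix_mult_def transpose_def mat_def)

lemma tetra_expl: "tetra = {vector [1,1,1], vector [1,-1,-1], vector [-1,1,-1], vector [-1,-1,1]}"
  by (simp add: tetra_def)

lemma M1_Ominus: "spm id sD1 \<in> Ominus"
proof -
  have "spm id sD1 \<in> O3"
    by (rule spm_O3_gen) (simp add: sum_3 spm_def sD1_def, metis exhaust_3)
  moreover have "(\<lambda>v. spm id sD1 *v v) ` tetra = tetra"
    unfolding tetra_def by (simp add: spm_mulv chi3 sD1_def insert_commute)
  ultimately show ?thesis by (simp add: Ominus_def)
qed

lemma M2_Ominus: "spm id sD2 \<in> Ominus"
proof -
  have "spm id sD2 \<in> O3"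
    by (rule spm_O3_gen) (simp add: sum_3 spm_def sD2_def, metis exhaust_3)
  moreover have "(\<lambda>v. spm id sD2 *v v) ` tetra = tetra"
    unfolding tetra_def by (simp add: spm_mulv chi3 sD2_def vector3_eq insert_commute)
  ultimately show ?thesis by (simp add: Ominus_def)
qed

lemma M3_Ominus: "spm cyc (\<lambda>_. 1) \<in> Ominus"
proof -
  have "spm cyc (\<lambda>_. 1) \<in> O3"
    by (rule spm_O3_gen) (simp add: sum_3 spm_def cyc_def, metis exhaust_3)
  moreover have "(\<lambda>v. spm cyc (\<lambda>_. 1) *v v) ` tetra = tetra"
    unfolding tetra_def by (simp add: spm_mulv chi3 cyc_def vector3_eq insert_commute)
  ultimately show ?thesis by (simp add: Ominus_def)
qed

lemma M4_Ominus: "spm swp (\<lambda>_. 1) \<in> Ominus"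
proof -
  have "spm swp (\<lambda>_. 1) \<in> O3"
    by (rule spm_O3_gen) (simp add: sum_3 spm_def swp_def, metis exhaust_3)
  moreover have "(\<lambda>v. spm swp (\<lambda>_. 1) *v v) ` tetra = tetra"
    unfolding tetra_def by (simp add: spm_mulv chi3 swp_def vector3_eq insert_commute)
  ultimately show ?thesis by (simp add: Ominus_def)
qed

lemma inv_gens: assumes "\<And>r. r \<in> Ominus \<Longrightarrow> act r X = X"
  shows "X = X$1$2$3 *\<^sub>R T0"
proof -
  have D1': "(1 - sD1 i * sD1 j * sD1 k) * X$i$j$k = 0" for i j k
  proof -
    have "act (spm id sD1) X $i$j$k = X$i$j$k" using assms[OF M1_Ominus] by simp
    then have "sD1 i * sD1 j * sD1 k * X$i$j$k = X$i$j$k" by (simp add: act_spm)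
    then show ?thesis by (simp add: algebra_simps)
  qed
  have D2': "(1 - sD2 i * sD2 j * sD2 k) * X$i$j$k = 0" for i j k
  proof -
    have "act (spm id sD2) X $i$j$k = X$i$j$k" using assms[OF M2_Ominus] by simp
    then have "sD2 i * sD2 j * sD2 k * X$i$j$k = X$i$j$k" by (simp add: act_spm)
    then show ?thesis by (simp add: algebra_simps)
  qed
  have C: "\<And>i j k. X$i$j$k = X$(cyc i)$(cyc j)$(cyc k)"
    using assms[OF M3_Ominus] act_spm[of cyc "\<lambda>_. 1" X] by simp
  have S: "\<And>i j k. X$i$j$k = X$(swp i)$(swp j)$(swp k)"
    using assms[OF M4_Ominus] act_spm[of swp "\<lambda>_. 1" X] by simp
  have c: "X$1$2$3 = X$2$3$1" "X$2$3$1 = X$3$1$2" using C[of 1 2 3] C[of 2 3 1] by (simp_all add: cyc_def)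
  have s: "X$1$2$3 = X$2$1$3" "X$2$3$1 = X$1$3$2" "X$3$1$2 = X$3$2$1"
    using S[of 1 2 3] S[of 2 3 1] S[of 3 1 2] by (simp_all add: swp_def)
  have p: "X$2$3$1 = X$1$2$3" "X$3$1$2 = X$1$2$3" "X$2$1$3 = X$1$2$3" "X$1$3$2 = X$1$2$3" "X$3$2$1 = X$1$2$3"
    using c s by simp_all
  { fix i j k :: 3
    have "X$i$j$k = (X$1$2$3 *\<^sub>R T0)$i$j$k"
      using exhaust_3[of i] exhaust_3[of j] exhaust_3[of k] D1'[of i j k] D2'[of i j k]
      apply (elim disjE)
      by (simp_all add: T0_def sD1_def sD2_def p) }
  then show ?thesis unfolding vec_eq_iff by blast
qed

lemma partA_form: assumes g: "g \<in> O3" and sub: "conj g Ominus \<subseteq> sym_group e"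
  shows "e = act g ((act (transpose g) e)$1$2$3 *\<^sub>R T0)"
proof -
  let ?e' = "act (transpose g) e"
  have oo1: "transpose g ** g = mat 1" "g ** transpose g = mat 1" using O3_orth[OF g] by auto
  have "act r ?e' = ?e'" if oo: "r \<in> Ominus" for r
  proof -
    have "g ** r ** transpose g \<in> sym_group e" using sub oo unfolding conj_def O3_inv[OF g] by blast
    then have ee: "act (g ** r ** transpose g) e = e" by (simp add: sym_group_def)
    have "act r ?e' = act (transpose g) (act (g ** r ** transpose g) e)"
      by (simp add: act_mult[symmetric] matrix_mul_assoc oo1 matrix_mul_lid)
    also have "\<dots> = ?e'" using ee by simp
    finally show ?thesis .
  qed
  then have "?e' = ?e'$1$2$3 *\<^sub>R T0" by (rule inv_gens)
  then have "act g ?e' = act g (?e'$1$2$3 *\<^sub>R T0)" by simp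
  then show ?thesis using act_inv2[OF g] by simp
qed

lemma small_le0: fixes x K :: real assumes K: "K \<ge> 0" and H: "\<And>t. 0 < t \<Longrightarrow> t \<le> 1 \<Longrightarrow> x \<le> t * K"
  shows "x \<le> 0"
proof (rule ccontr)
  assume "\<not> x \<le> 0" then have x: "x > 0" by simp
  define t where "t = min 1 (x / (2*(K+1)))"
  have t0: "0 < t" using x K by (simp add: t_def)
  have t1: "t \<le> 1" by (simp add: t_def)
  have "t \<le> x / (2*(K+1))" by (simp add: t_def)
  then have "t * K \<le> (x / (2*(K+1))) * K" using K by (rule mult_right_mono)
  also have "\<dots> = x * (K / (2*(K+1)))" by simp
  also have "\<dots> < x * 1"
  proof (rule mult_strict_left_mono)
    show "K / (2*(K+1)) < 1" using K by (simp add: field_simps)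
  qed (rule x)
  also have "\<dots> = x" by simp
  finally show False using H[OF t0 t1] by simp
qed

lemma sqrt_cube_bound: fixes t :: real assumes "t^2 \<le> 1" shows "sqrt (1 + t^2) ^ 3 \<le> 1 + 3*t^2"
proof -
  define u where "u = sqrt (1 + t^2)"
  have u1: "u \<ge> 1" by (simp add: u_def)
  have u2: "u^2 = 1 + t^2" by (simp add: u_def)
  have "(u - 1) * (u^2 - 2*u - 2) \<le> 0"
  proof (rule mult_nonneg_nonpos)
    show "u - 1 \<ge> 0" using u1 by simp
    show "u^2 - 2*u - 2 \<le> 0" using u1 u2 assms by simp
  qed
  moreover have "(u - 1) * (u^2 - 2*u - 2) = u^3 - 3*u^2 + 2" by (simp add: power2_eq_square power3_eq_cube algebra_simps)
  ultimately have "u^3 \<le> 3*u^2 - 2" by simp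
  then show ?thesis using u2 by (simp add: u_def)
qed

lemma fo: fixes a b c m :: real assumes m0: "m \<ge> 0"
  and H: "\<And>t. m + 3*a*t + 3*b*t^2 + c*t^3 \<le> m * sqrt (1 + t^2) ^ 3"
  shows "a = 0"
proof -
  define K where "K = 3*\<bar>m\<bar> + 3*\<bar>b\<bar> + \<bar>c\<bar>"
  have K0: "K \<ge> 0" by (simp add: K_def)
  have key: "3*a*t \<le> t^2 * K" if "t^2 \<le> 1" for t
  proof -
    have "m * sqrt (1 + t^2) ^ 3 \<le> m * (1 + 3*t^2)" using sqrt_cube_bound[OF that] m0 by (rule mult_left_mono)
    then have "3*a*t \<le> t^2 * (3*m - 3*b - c*t)" using H[of t] by (simp add: power2_eq_square power3_eq_cube algebra_simps)
    also have "\<dots> \<le> t^2 * K"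
    proof (rule mult_left_mono)
      have "\<bar>t\<bar> \<le> 1" using that by (simp add: abs_square_le_1)
      then have "\<bar>c*t\<bar> \<le> \<bar>c\<bar>" by (simp add: abs_mult mult_left_le)
      then show "3*m - 3*b - c*t \<le> K" unfolding K_def by linarith
    qed simp
    finally show ?thesis .
  qed
  have "3*a \<le> 0"
  proof (rule small_le0[OF K0])
    fix t :: real assume t: "0 < t" "t \<le> 1"
    then have "t^2 \<le> 1" by (simp add: power_le_one)
    from key[OF this] have "t * (3*a) \<le> t * (t*K)" by (simp add: power2_eq_square mult_ac)
    then show "3*a \<le> t*K" using t by simp
  qed
  moreover have "-3*a \<le> 0"
  proof (rule small_le0[OF K0])
    fix t :: real assume t: "0 < t" "t \<le> 1"
    then have "(-t)^2 \<le> 1" by (simp add: power_le_one)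
    from key[OF this] have "t * (-3*a) \<le> t * (t*K)" by (simp add: power2_eq_square mult_ac)
    then show "-3*a \<le> t*K" using t(1) mult_le_cancel_left_pos by blast
  qed
  ultimately show ?thesis by simp
qed

lemma tsym_perms: assumes "tsym h"
  shows "h$i$j$k = h$j$i$k" "h$i$j$k = h$i$k$j" "h$i$j$k = h$k$j$i" "h$i$j$k = h$j$k$i" "h$i$j$k = h$k$i$j"
  using assms unfolding tsym_def by metis+

lemma canon: assumes "tsym h" shows
 "h$1$2$1 = h$1$1$2" "h$1$3$1 = h$1$1$3" "h$1$3$2 = h$1$2$3" "h$2$1$1 = h$1$1$2" "h$2$1$2 = h$1$2$2" "h$2$1$3 = h$1$2$3" "h$2$2$1 = h$1$2$2" "h$2$3$1 = h$1$2$3" "h$2$3$2 = h$2$2$3" "h$3$1$1 = h$1$1$3" "h$3$1$2 = h$1$2$3" "h$3$1$3 = h$1$3$3" "h$3$2$1 = h$1$2$3" "h$3$2$2 = h$2$2$3" "h$3$2$3 = h$2$3$3" "h$3$3$1 = h$1$3$3" "h$3$3$2 = h$2$3$3"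
  using tsym_perms[OF assms] by metis+

lemma cub_expl: assumes "tsym h" shows
  "cub h (vector [x,y,z]) = h$1$1$1*x^3 + h$2$2$2*y^3 + h$3$3$3*z^3 + 3*h$1$1$2*x^2*y + 3*h$1$1$3*x^2*z
     + 3*h$1$2$2*x*y^2 + 3*h$1$3$3*x*z^2 + 3*h$2$2$3*y^2*z + 3*h$2$3$3*y*z^2 + 6*h$1$2$3*x*y*z"
  by (simp add: cub_def sum_3 canon[OF assms] power2_eq_square power3_eq_cube algebra_simps)

lemma tr_expl: assumes "tsym h" "tr3 h = 0" shows
  "h$1$1$1 + h$1$2$2 + h$1$3$3 = 0" "h$1$1$2 + h$2$2$2 + h$2$3$3 = 0" "h$1$1$3 + h$2$2$3 + h$3$3$3 = 0"
proof -
  have "tr3 h $1 = 0" "tr3 h $2 = 0" "tr3 h $3 = 0" using assms(2) by simp_all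
  then show "h$1$1$1 + h$1$2$2 + h$1$3$3 = 0" "h$1$1$2 + h$2$2$2 + h$2$3$3 = 0" "h$1$1$3 + h$2$2$3 + h$3$3$3 = 0"
    by (simp_all add: tr3_def sum_3 canon[OF assms(1)])
qed

lemma norm3: "norm (vector [x,y,z] :: real^3) = sqrt (x^2 + y^2 + z^2)"
  by (simp add: norm_eq_sqrt_inner inner_vec_def sum_3 power2_eq_square)

lemma tsym_zero: assumes "tsym h" "h$1$1$1 = 0" "h$2$2$2 = 0" "h$3$3$3 = 0" "h$1$1$2 = 0" "h$1$1$3 = 0"
  "h$1$2$2 = 0" "h$1$3$3 = 0" "h$2$2$3 = 0" "h$2$3$3 = 0" "h$1$2$3 = 0"
  shows "h = 0"
proof -
  { fix i j k :: 3
    have "h$i$j$k = 0"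
      using exhaust_3[of i] exhaust_3[of j] exhaust_3[of k] assms(2-) canon[OF assms(1)]
      by (elim disjE) simp_all }
  then show ?thesis unfolding vec_eq_iff by simp
qed

lemma coordB: assumes sy: "tsym h" and tr: "tr3 h = 0" and d2: "d2 h = c *\<^sub>R mat 1"
  and mx: "\<And>x. cub h x \<le> m * norm x ^ 3" and mv: "cub h (vector [0,0,1]) = m"
  shows "h = 0 \<or> (m > 0 \<and> h$1$3$3 = 0 \<and> h$2$3$3 = 0 \<and> h$1$2$3 = 0 \<and> h$1$1$3 = -m/2 \<and> h$2$2$3 = -m/2
     \<and> h$3$3$3 = m \<and> h$1$2$2 = -h$1$1$1 \<and> h$1$1$2 = -h$2$2$2 \<and> (h$1$1$1)^2 + (h$2$2$2)^2 = m^2/2)"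
proof -
  note cx = cub_expl[OF sy]
  have Z: "h$3$3$3 = m" using mv by (simp add: cx)
  have "cub h (vector [0,0,-1]) \<le> m * norm (vector [0,0,-1::real] :: real^3) ^ 3" by (rule mx)
  then have m0: "m \<ge> 0" using Z by (simp add: cx norm3)
  have P: "h$1$3$3 = 0"
  proof (rule fo[OF m0])
    fix t :: real
    have "cub h (vector [t,0,1]) \<le> m * norm (vector [t,0,1::real] :: real^3) ^ 3" by (rule mx)
    then show "m + 3 * h$1$3$3 * t + 3 * h$1$1$3 * t^2 + h$1$1$1 * t^3 \<le> m * sqrt (1 + t^2) ^ 3"
      using Z by (simp add: cx norm3 algebra_simps)
  qed
  have Q: "h$2$3$3 = 0"
  proof (rule fo[OF m0])
    fix t :: real
    have "cub h (vector [0,t,1]) \<le> m * norm (vector [0,t,1::real] :: real^3) ^ 3" by (rule mx)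
    then show "m + 3 * h$2$3$3 * t + 3 * h$2$2$3 * t^2 + h$2$2$2 * t^3 \<le> m * sqrt (1 + t^2) ^ 3"
      using Z by (simp add: cx norm3 algebra_simps)
  qed
  note te = tr_expl[OF sy tr]
  have R: "h$1$2$2 = -h$1$1$1" using te(1) P by simp
  have S: "h$1$1$2 = -h$2$2$2" using te(2) Q by simp
  have Z': "h$3$3$3 = - h$1$1$3 - h$2$2$3" using te(3) by simp
  let ?A = "h$1$1$1" and ?B = "h$2$2$2" and ?C = "h$1$1$3" and ?D = "h$1$2$3" and ?E = "h$2$2$3"
  have dd: "\<And>i j. d2 h $i$j = (if i = j then c else 0)" using d2 by (simp add: mat_def)
  have e11: "d2 h $1$1 = 2*?A*?A + 2*?B*?B + 2*?C*?C + 2*?D*?D"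
    by (simp add: d2_def sum_3 canon[OF sy] P Q R S Z' algebra_simps)
  have e22: "d2 h $2$2 = 2*?A*?A + 2*?B*?B + 2*?D*?D + 2*?E*?E"
    by (simp add: d2_def sum_3 canon[OF sy] P Q R S Z' algebra_simps)
  have e33: "d2 h $3$3 = 2*?C*?C + 2*?C*?E + 2*?D*?D + 2*?E*?E"
    by (simp add: d2_def sum_3 canon[OF sy] P Q R S Z' algebra_simps)
  have e12: "d2 h $1$2 = 2*?C*?D + 2*?D*?E"
    by (simp add: d2_def sum_3 canon[OF sy] P Q R S Z' algebra_simps)
  have g1: "2*?A*?A + 2*?B*?B + 2*?C*?C + 2*?D*?D = 2*?A*?A + 2*?B*?B + 2*?D*?D + 2*?E*?E"
    using dd[of 1 1] dd[of 2 2] e11 e22 by simp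
  have g2: "2*?A*?A + 2*?B*?B + 2*?C*?C + 2*?D*?D = 2*?C*?C + 2*?C*?E + 2*?D*?D + 2*?E*?E"
    using dd[of 1 1] dd[of 3 3] e11 e33 by simp
  have g3: "2*?C*?D + 2*?D*?E = 0" using dd[of 1 2] e12 by simp
  have CE: "?C + ?E = - m" using Z Z' by simp
  show ?thesis
  proof (cases "m = 0")
    case False
    then have mp: "m > 0" using m0 by simp
    have "?D * (?C + ?E) = 0" using g3 by (simp add: algebra_simps)
    then have D: "?D = 0" using CE mp by simp
    have "(?C - ?E) * (?C + ?E) = 0" using g1 by (simp add: algebra_simps)
    then have "?C = ?E" using CE mp by simp
    then have C: "?C = -m/2" "?E = -m/2" using CE by simp_all
    have "?A^2 + ?B^2 = m^2/2" using g2 C D by (simp add: power2_eq_square field_simps)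
    then show ?thesis using mp P Q D C Z R S by simp
  next
    case True
    then have E: "?E = -?C" using CE by simp
    have "?C*?E = -(?C*?C)" "?E*?E = ?C*?C" using E by simp_all
    then have "?A*?A + ?B*?B = 0" using g2 by linarith
    then have "?A = 0 \<and> ?B = 0" using sum_squares_eq_zero_iff by blast
    then have AB: "?A = 0" "?B = 0" by simp_all
    have c1: "cub h (vector [1,0,1]) \<le> 0" "cub h (vector [1,0,-1]) \<le> 0"
       "cub h (vector [1,1,1]) \<le> 0" "cub h (vector [1,1,-1]) \<le> 0"
      using mx True by simp_all
    have "?C = 0" "?D = 0" using c1 AB E Z True P Q R S by (simp_all add: cx)
    then have "h = 0" using tsym_zero[OF sy] AB E Z True P Q R S by simp
    then show ?thesis by simp
  qed
qed

definition Qm :: "real \<Rightarrow> real \<Rightarrow> real^3^3" where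
  "Qm c s = vector [vector [c, s, 0], vector [-s, c, 0], vector [0, 0, 1]]"

definition G0 :: "real^3^3" where
  "G0 = vector [vector [sqrt 6 / 3, - sqrt 6 / 6, - sqrt 6 / 6], vector [0, sqrt 2 / 2, - sqrt 2 / 2],
                vector [sqrt 3 / 3, sqrt 3 / 3, sqrt 3 / 3]]"

lemma sq6: "sqrt 6 = sqrt 2 * sqrt 3" by (simp add: real_sqrt_mult[symmetric])
lemma sq2: "sqrt 2 * sqrt 2 = (2::real)" by simp
lemma sq3: "sqrt 3 * sqrt 3 = (3::real)" by simp
lemma sq2': "sqrt 2 * (sqrt 2 * x) = (2::real) * x" by (simp add: mult.assoc[symmetric])
lemma sq3': "sqrt 3 * (sqrt 3 * x) = (3::real) * x" by (simp add: mult.assoc[symmetric])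

lemma Qm_O3: assumes "c^2 + s^2 = 1" shows "Qm c s \<in> O3"
  unfolding O3_def mem_Collect_eq orthogonal_matrix
proof -
  { fix i j :: 3
    have "(transpose (Qm c s) ** Qm c s) $ i $ j = mat 1 $ i $ j"
      using exhaust_3[of i] exhaust_3[of j] assms
      by (elim disjE) (simp_all add: Qm_def matrix_matrix_mult_def transpose_def mat_def sum_3 power2_eq_square algebra_simps) }
  then show "transpose (Qm c s) ** Qm c s = mat 1" unfolding vec_eq_iff by blast
qed

lemma G0_O3: "G0 \<in> O3"
  unfolding O3_def mem_Collect_eq orthogonal_matrix
proof -
  { fix i j :: 3
    have "(transpose G0 ** G0) $ i $ j = mat 1 $ i $ j"
      using exhaust_3[of i] exhaust_3[of j]
      by (elim disjE) (simp_all add: G0_def matrix_matrix_mult_def transpose_def mat_def sum_3 sq6 field_simps) }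
  then show "transpose G0 ** G0 = mat 1" unfolding vec_eq_iff by blast
qed

definition "Hc = act G0 (sqrt 3 *\<^sub>R T0)"

lemma Hc_sym: "tsym Hc"
  unfolding Hc_def by (rule act_sym) (simp add: tsym_def T0_def)

lemma Hc0: "Hc$1$1$1 = sqrt 2"
  by (simp add: Hc_def act_def G0_def T0_def sum_3 sq6 field_simps) (simp add: sq2' sq3')
lemma Hc1: "Hc$1$2$2 = - sqrt 2"
  by (simp add: Hc_def act_def G0_def T0_def sum_3 sq6 field_simps)
lemma Hc2: "Hc$1$1$3 = -1"
  by (simp add: Hc_def act_def G0_def T0_def sum_3 sq6 field_simps) (simp add: sq2' sq3')
lemma Hc3: "Hc$2$2$3 = -1"
  by (simp add: Hc_def act_def G0_def T0_def sum_3 sq6 field_simps)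
lemma Hc4: "Hc$3$3$3 = 2"
  by (simp add: Hc_def act_def G0_def T0_def sum_3 sq6 field_simps)
lemma Hc5: "Hc$1$1$2 = 0"
  by (simp add: Hc_def act_def G0_def T0_def sum_3 sq6 field_simps)
lemma Hc6: "Hc$2$2$2 = 0"
  by (simp add: Hc_def act_def G0_def T0_def sum_3 sq6 field_simps)
lemma Hc7: "Hc$1$2$3 = 0"
  by (simp add: Hc_def act_def G0_def T0_def sum_3 sq6 field_simps)
lemma Hc8: "Hc$1$3$3 = 0"
  by (simp add: Hc_def act_def G0_def T0_def sum_3 sq6 field_simps)
lemma Hc9: "Hc$2$3$3 = 0"
  by (simp add: Hc_def act_def G0_def T0_def sum_3 sq6 field_simps)
lemmas Hc_comps = Hc0 Hc1 Hc2 Hc3 Hc4 Hc5 Hc6 Hc7 Hc8 Hc9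

lemma sin_treble: "sin (3*(x::real)) = 3 * sin x - 4 * (sin x)^3"
proof -
  have "sin (3*x) = sin (2*x + x)" by simp
  also have "\<dots> = 2 * sin x * cos x * cos x + (cos x ^2 - sin x ^2) * sin x"
    by (simp only: sin_add sin_double cos_double)
  also have "\<dots> = 3 * sin x - 4 * (sin x)^3"
    using sin_cos_squared_add[of x] by algebra
  finally show ?thesis .
qed

lemma tsym_eq: assumes "tsym X" "tsym Y" "X$1$1$1 = Y$1$1$1" "X$2$2$2 = Y$2$2$2" "X$3$3$3 = Y$3$3$3" "X$1$1$2 = Y$1$1$2" "X$1$1$3 = Y$1$1$3"
  "X$1$2$2 = Y$1$2$2" "X$1$3$3 = Y$1$3$3" "X$2$2$3 = Y$2$2$3" "X$2$3$3 = Y$2$3$3" "X$1$2$3 = Y$1$2$3"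
  shows "X = Y"
proof -
  have s: "tsym (X - Y)" using assms(1,2) by (simp add: tsym_def)
  have "X - Y = 0" by (rule tsym_zero[OF s]) (simp_all add: assms(3-))
  then show ?thesis by simp
qed

lemma rotQ: assumes sy: "tsym h" and cs: "c^2 + s^2 = 1"
  and p: "h$1$3$3 = 0" "h$2$3$3 = 0" "h$1$2$3 = 0" "h$1$1$3 = -k" "h$2$2$3 = -k" "h$3$3$3 = 2*k"
     "h$1$2$2 = -h$1$1$1" "h$1$1$2 = -h$2$2$2"
     "h$1$1$1 = sqrt 2 * k * (4*c^3 - 3*c)" "h$2$2$2 = sqrt 2 * k * (3 * s - 4 * s^3)"
  shows "h = act (Qm c s) (k *\<^sub>R Hc)"
proof (rule tsym_eq[OF sy])
  show "tsym (act (Qm c s) (k *\<^sub>R Hc))" by (rule act_sym) (use Hc_sym in \<open>simp add: tsym_def\<close>)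
  note e = act_def Qm_def sum_3 canon[OF Hc_sym] Hc_comps p
  have s2: "s^2 = 1 - c^2" using cs by simp
  show "h$1$1$1 = act (Qm c s) (k *\<^sub>R Hc) $1$1$1"
    by (simp add: e; use cs in algebra)
  show "h$2$2$2 = act (Qm c s) (k *\<^sub>R Hc) $2$2$2"
    by (simp add: e; use cs in algebra)
  show "h$3$3$3 = act (Qm c s) (k *\<^sub>R Hc) $3$3$3"
    by (simp add: e; use cs in algebra)
  show "h$1$1$2 = act (Qm c s) (k *\<^sub>R Hc) $1$1$2"
    by (simp add: e; use cs in algebra)
  show "h$1$1$3 = act (Qm c s) (k *\<^sub>R Hc) $1$1$3"
    by (simp add: e; use cs in algebra)
  show "h$1$2$2 = act (Qm c s) (k *\<^sub>R Hc) $1$2$2"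
    by (simp add: e; use cs in algebra)
  show "h$1$3$3 = act (Qm c s) (k *\<^sub>R Hc) $1$3$3"
    by (simp add: e; use cs in algebra)
  show "h$2$2$3 = act (Qm c s) (k *\<^sub>R Hc) $2$2$3"
    by (simp add: e; use cs in algebra)
  show "h$2$3$3 = act (Qm c s) (k *\<^sub>R Hc) $2$3$3"
    by (simp add: e; use cs in algebra)
  show "h$1$2$3 = act (Qm c s) (k *\<^sub>R Hc) $1$2$3"
    by (simp add: e; use cs in algebra)
qed

lemma conj_scalar: assumes "g \<in> O3" shows "g ** (a *\<^sub>R mat 1) ** transpose g = a *\<^sub>R mat 1"
proof -
  have "g ** (a *\<^sub>R mat 1) = a *\<^sub>R g" by (simp add: matrix_scalar_ac)
  then have "g ** (a *\<^sub>R mat 1) ** transpose g = a *\<^sub>R (g ** transpose g)"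
    by (simp add: scalar_matrix_assoc)
  then show ?thesis using O3_orth[OF assms] by simp
qed

lemma cub_cont: "continuous_on S (cub h)"
  unfolding cub_def by (intro continuous_intros)

lemma axis3: "(vector [0,0,1] :: real^3) = axis 3 1"
  by (simp add: vec_eq_iff forall_3 axis_def)

lemma coreB: assumes sy: "tsym h" and tr: "tr3 h = 0" and dd: "d2 h = c *\<^sub>R mat 1"
  shows "\<exists>G\<in>O3. \<exists>l. h = act G (l *\<^sub>R T0)"
proof -
  let ?S = "sphere (0::real^3) 1"
  have "axis 1 1 \<in> ?S" by simp
  then have ne: "?S \<noteq> {}" by blast
  obtain v where v: "v \<in> ?S" and vmax: "\<And>y. y \<in> ?S \<Longrightarrow> cub h y \<le> cub h v"
    using continuous_attains_sup[OF compact_sphere ne cub_cont] by blast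
  define m where "m = cub h v"
  have nv: "norm v = 1" using v by simp
  obtain R where Ro: "orthogonal_matrix R" and Rv: "R *v axis 3 1 = v"
    using orthogonal_matrix_exists_basis[OF nv] by blast
  have R: "R \<in> O3" using Ro by (simp add: O3_def)
  have RT: "transpose R \<in> O3" using R by (rule O3_transpose)
  define h1 where "h1 = act (transpose R) h"
  have sy1: "tsym h1" unfolding h1_def using sy by (rule act_sym)
  have tr1: "tr3 h1 = 0" unfolding h1_def using tr3_act[OF RT, of h] tr by simp
  have dd1: "d2 h1 = c *\<^sub>R mat 1"
    unfolding h1_def d2_act[OF RT] dd using conj_scalar[OF RT] by simp
  have cb: "cub h1 x = cub h (R *v x)" for x unfolding h1_def cub_act by simp
  have mx: "cub h1 x \<le> m * norm x ^ 3" for x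
  proof (cases "x = 0")
    case True then show ?thesis by (simp add: cb cub_def)
  next
    case False
    define n where "n = norm x"
    have n0: "n > 0" using False by (simp add: n_def)
    define y where "y = (1/n) *\<^sub>R (R *v x)"
    have "norm y = 1" using n0 O3_norm[OF R, of x] by (simp add: y_def n_def)
    then have "cub h y \<le> m" using vmax m_def by simp
    moreover have "R *v x = n *\<^sub>R y" using n0 by (simp add: y_def)
    ultimately have "cub h (R *v x) \<le> n^3 * m"
      using cub_scale[of h n y] n0 by (simp add: mult_left_mono)
    then show ?thesis by (simp add: cb n_def mult.commute)
  qed
  have mv: "cub h1 (vector [0,0,1]) = m" by (simp add: cb axis3 Rv m_def)
  have hback: "h = act R h1" unfolding h1_def using act_inv2[OF R] by simp
  from coordB[OF sy1 tr1 dd1 mx mv] show ?thesis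
  proof
    assume "h1 = 0"
    then have "h = act (mat 1) (0 *\<^sub>R T0)" using hback by (simp add: act_zero act_id)
    then show ?thesis using O3_id by blast
  next
    assume H: "m > 0 \<and> h1$1$3$3 = 0 \<and> h1$2$3$3 = 0 \<and> h1$1$2$3 = 0 \<and> h1$1$1$3 = -m/2 \<and> h1$2$2$3 = -m/2
     \<and> h1$3$3$3 = m \<and> h1$1$2$2 = -h1$1$1$1 \<and> h1$1$1$2 = -h1$2$2$2 \<and> (h1$1$1$1)^2 + (h1$2$2$2)^2 = m^2/2"
    define k where "k = m/2"
    define r where "r = sqrt 2 * k"
    have r0: "r > 0" using H by (simp add: r_def k_def)
    have "(h1$1$1$1 / r)^2 + (h1$2$2$2 / r)^2 = ((h1$1$1$1)^2 + (h1$2$2$2)^2) / r^2"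
      by (simp add: power_divide add_divide_distrib)
    also have "\<dots> = 1" using H r0 by (simp add: r_def k_def power_mult_distrib power_divide)
    finally obtain phi where phi: "h1$1$1$1 / r = cos phi" "h1$2$2$2 / r = sin phi"
      using sincos_total_2pi by blast
    define th where "th = phi / 3"
    have ph: "phi = 3 * th" by (simp add: th_def)
    have "h1$1$1$1 = r * cos phi" using phi(1) r0 by (simp add: field_simps)
    then have A: "h1$1$1$1 = sqrt 2 * k * (4 * cos th ^ 3 - 3 * cos th)"
      unfolding ph cos_treble_cos by (simp add: r_def)
    have "h1$2$2$2 = r * sin phi" using phi(2) r0 by (simp add: field_simps)
    then have B: "h1$2$2$2 = sqrt 2 * k * (3 * sin th - 4 * sin th ^ 3)"
      unfolding ph sin_treble by (simp add: r_def)
    have cs: "(cos th)^2 + (sin th)^2 = 1" by simp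
    have "h1 = act (Qm (cos th) (sin th)) (k *\<^sub>R Hc)"
      by (rule rotQ[OF sy1 cs]) (use H A B in \<open>simp_all add: k_def\<close>)
    also have "\<dots> = act (Qm (cos th) (sin th) ** G0) ((k * sqrt 3) *\<^sub>R T0)"
      by (simp add: Hc_def act_scaleR act_mult)
    finally have "h = act (R ** (Qm (cos th) (sin th) ** G0)) ((k * sqrt 3) *\<^sub>R T0)"
      using hback by (simp add: act_mult)
    moreover have "R ** (Qm (cos th) (sin th) ** G0) \<in> O3"
      using R Qm_O3[OF cs] G0_O3 by (simp add: O3_mult)
    ultimately show ?thesis by blast
  qed
qed

lemma kdelta_mat: "(\<chi> i j. kdelta i j) = (mat 1 :: real^3^3)"
  by (simp add: vec_eq_iff kdelta_def mat_def)

lemma dev_zero: assumes "dev M = 0" shows "M = (tr2 M / 3) *\<^sub>R mat 1"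
  using assms unfolding dev_def kdelta_mat by simp

lemma dev_scalar: "dev (a *\<^sub>R mat 1) = 0"
  by (simp add: dev_def kdelta_mat tr2_def sum_3 mat_def)

lemma d2_scale: "d2 (l *\<^sub>R X) = (l*l) *\<^sub>R d2 X"
  by (simp add: d2_def vec_eq_iff sum_distrib_left mult_ac)

lemma tr3_scale: "tr3 (l *\<^sub>R X) = l *\<^sub>R tr3 X"
  by (simp add: tr3_def vec_eq_iff sum_distrib_left)

lemma harm_id: assumes "tsym X" "tr3 X = 0" shows "harm X = X"
proof -
  { fix i j k
    have a: "X$j$i$k = X$i$j$k" "X$k$j$i = X$i$j$k"
      using tsym_perms(1)[OF assms(1), of i j k] tsym_perms(3)[OF assms(1), of i j k] by simp_all
    have "sym_part X $i$j$k = X$i$j$k" by (simp add: sym_part_def a) }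
  then have s: "sym_part X = X" unfolding vec_eq_iff by blast
  have "trace_vec X = 0" using assms(2) s unfolding trace_vec_def tr3_def by (simp add: vec_eq_iff)
  moreover have "q_odot 0 = 0" by (simp add: q_odot_def vec_eq_iff)
  ultimately show ?thesis by (simp add: harm_def s)
qed

lemma harm_piez: assumes "e \<in> Piez" shows "tsym (harm e)" "tr3 (harm e) = 0"
proof -
  have P: "\<And>i j k. e$i$j$k = e$i$k$j" using assms by (simp add: Piez_def)
  have kd: "\<And>i j. kdelta i j = kdelta j i" by (simp add: kdelta_def)
  show "tsym (harm e)" unfolding tsym_def
  proof (intro allI conjI)
    fix i j k
    show "harm e $i$j$k = harm e $j$i$k"
      using P[of k i j] by (simp add: harm_def sym_part_def q_odot_def kd algebra_simps)
    show "harm e $i$j$k = harm e $i$k$j"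
      using P[of i j k] P[of k i j] P[of j i k] by (simp add: harm_def sym_part_def q_odot_def kd algebra_simps)
  qed
  { fix i :: 3
    have "tr3 (harm e) $ i = 0"
      using exhaust_3[of i]
      by (elim disjE) (simp_all add: tr3_def harm_def q_odot_def kdelta_def sum_3 trace_vec_def field_simps) }
  then show "tr3 (harm e) = 0" by (simp add: vec_eq_iff)
qed

lemma sym_group_zero: "sym_group 0 = O3"
  by (auto simp: sym_group_def act_zero)

lemma negI_notin: "(-1::real) *\<^sub>R mat 1 \<notin> Ominus"
proof
  assume "(-1::real) *\<^sub>R mat 1 \<in> Ominus"
  then have im: "(\<lambda>v. ((-1::real) *\<^sub>R mat 1) *v v) ` tetra = tetra" by (simp add: Ominus_def)
  have "vector [1,1,1] \<in> tetra" by (simp add: tetra_def)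
  then have "((-1::real) *\<^sub>R mat 1) *v vector [1,1,1] \<in> tetra" using im by blast
  moreover have "((-1::real) *\<^sub>R mat 1) *v vector [1,1,1] = (vector [-1,-1,-1] :: real^3)"
    by (simp add: vec_eq_iff forall_3 matrix_vector_mult_def mat_def sum_3)
  ultimately show False by (simp add: tetra_char)
qed

lemma Ominus_O3: "Ominus \<subseteq> O3" by (auto simp: Ominus_def)

lemma Ominus_sub: "Ominus \<subseteq> sym_group (l *\<^sub>R T0)"
  using Ominus_O3 by (auto simp: sym_group_def act_scaleR Ominus_stab)

lemma stab_l: assumes "l \<noteq> 0" shows "sym_group (l *\<^sub>R T0) = Ominus"
proof
  show "sym_group (l *\<^sub>R T0) \<subseteq> Ominus"
  proof
    fix r assume "r \<in> sym_group (l *\<^sub>R T0)"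
    then have r: "r \<in> O3" "l *\<^sub>R act r T0 = l *\<^sub>R T0" by (auto simp: sym_group_def act_scaleR)
    then have "act r T0 = T0" using assms by simp
    then show "r \<in> Ominus" using stab_T0 r(1) by blast
  qed
qed (rule Ominus_sub)

lemma conj_mono: "H \<subseteq> K \<Longrightarrow> conj g H \<subseteq> conj g K"
  by (auto simp: conj_def)

lemma formA: assumes g: "g \<in> O3" shows "harm (act g (l *\<^sub>R T0)) = act g (l *\<^sub>R T0)"
  "dev (d2 (act g (l *\<^sub>R T0))) = 0"
proof -
  have sy: "tsym (l *\<^sub>R T0)" using T0_sym by (simp add: tsym_def)
  have tr: "tr3 (l *\<^sub>R T0) = 0" by (simp add: tr3_scale T0_tr)
  show "harm (act g (l *\<^sub>R T0)) = act g (l *\<^sub>R T0)"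
    by (rule harm_id) (use act_sym[OF sy] tr3_act[OF g] tr in auto)
  have "d2 (act g (l *\<^sub>R T0)) = (l*l*2) *\<^sub>R mat 1"
    unfolding d2_act[OF g] d2_scale T0_d2 using conj_scalar[OF g] by simp
  then show "dev (d2 (act g (l *\<^sub>R T0))) = 0" by (simp add: dev_scalar)
qed

lemma formB: assumes "e \<in> Piez" "e - harm e = 0" "dev (d2 (harm e)) = 0"
  shows "\<exists>G\<in>O3. \<exists>l. e = act G (l *\<^sub>R T0)"
proof -
  have "e = harm e" using assms(2) by simp
  moreover have "\<exists>G\<in>O3. \<exists>l. harm e = act G (l *\<^sub>R T0)"
    using coreB[OF harm_piez[OF assms(1)] dev_zero[OF assms(3)]] .
  ultimately show ?thesis by simp
qed

theorem theorem7p1: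
  fixes e :: tensor3
  assumes "e \<in> Piez"
  shows "(e \<in> Sigma_bar_Ominus \<longleftrightarrow> e - harm e = 0 \<and> dev (d2 (harm e)) = 0)
       \<and> (e \<in> Sigma_Ominus \<longleftrightarrow> e - harm e = 0 \<and> dev (d2 (harm e)) = 0 \<and> harm e \<noteq> 0)"
proof -
  have A1: "e - harm e = 0 \<and> dev (d2 (harm e)) = 0" if es: "e \<in> Sigma_bar_Ominus"
  proof -
    obtain g where g: "g \<in> O3" and sub: "conj g Ominus \<subseteq> sym_group e"
      using es unfolding Sigma_bar_Ominus_def by blast
    define l where "l = (act (transpose g) e)$1$2$3"
    have ee: "e = act g (l *\<^sub>R T0)" using partA_form[OF g sub] by (simp add: l_def)
    show ?thesis using formA[OF g, of l] ee by simp
  qed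
  have B1: "e \<in> Sigma_bar_Ominus" if t: "e - harm e = 0" "dev (d2 (harm e)) = 0"
  proof -
    obtain G l where G: "G \<in> O3" and ee: "e = act G (l *\<^sub>R T0)" using formB[OF assms t] by blast
    have "conj G Ominus \<subseteq> conj G (sym_group (l *\<^sub>R T0))" by (rule conj_mono[OF Ominus_sub])
    also have "\<dots> = sym_group e" using sym_group_act[OF G] ee by simp
    finally show ?thesis using G by (auto simp: Sigma_bar_Ominus_def)
  qed
  have A2: "harm e \<noteq> 0" if es: "e \<in> Sigma_Ominus"
  proof
    assume h0: "harm e = 0"
    obtain g where g: "g \<in> O3" and sg: "sym_group e = conj g Ominus"
      using es unfolding Sigma_Ominus_def by blast
    have "e \<in> Sigma_bar_Ominus" using g sg by (auto simp: Sigma_bar_Ominus_def)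
    then have "e - harm e = 0" using A1 by blast
    then have "e = 0" using h0 by simp
    then have "O3 = conj g Ominus" using sg sym_group_zero by simp
    moreover have "(-1::real) *\<^sub>R mat 1 \<in> O3"
    proof -
      { fix i j :: 3
        have "(transpose ((-1::real) *\<^sub>R mat 1) ** ((-1::real) *\<^sub>R mat 1)) $ i $ j = (mat 1 :: real^3^3) $ i $ j"
          using exhaust_3[of i] exhaust_3[of j]
          by (elim disjE) (simp_all add: matrix_matrix_mult_def transpose_def mat_def sum_3) }
      then show ?thesis unfolding O3_def mem_Collect_eq orthogonal_matrix vec_eq_iff by blast
    qed
    ultimately obtain r where r: "r \<in> Ominus" and eq: "(-1::real) *\<^sub>R mat 1 = g ** r ** transpose g"
      unfolding conj_def O3_inv[OF g] by auto
    have o: "transpose g ** g = mat 1" using O3_orth[OF g] by simp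
    have "transpose g ** ((-1::real) *\<^sub>R mat 1) ** g = (transpose g ** g) ** r ** (transpose g ** g)"
      unfolding eq by (simp add: matrix_mul_assoc)
    also have "\<dots> = r" using o by (simp add: matrix_mul_lid matrix_mul_rid)
    finally have r1: "transpose g ** ((-1::real) *\<^sub>R mat 1) ** g = r" .
    have "transpose g ** ((-1::real) *\<^sub>R mat 1) = (-1::real) *\<^sub>R transpose g"
      by (metis matrix_scalar_ac matrix_mul_rid)
    then have "transpose g ** ((-1::real) *\<^sub>R mat 1) ** g = (-1::real) *\<^sub>R (transpose g ** g)"
      by (simp only: scalar_matrix_assoc)
    then have "r = (-1::real) *\<^sub>R mat 1" using r1 o by simp
    then show False using r negI_notin by simp
  qed
  have B2: "e \<in> Sigma_Ominus" if t: "e - harm e = 0" "dev (d2 (harm e)) = 0" "harm e \<noteq> 0"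
  proof -
    obtain G l where G: "G \<in> O3" and ee: "e = act G (l *\<^sub>R T0)" using formB[OF assms t(1,2)] by blast
    have "e \<noteq> 0" using t(1,3) by auto
    then have "l \<noteq> 0" using ee by (auto simp: act_zero)
    then have "sym_group e = conj G Ominus" using sym_group_act[OF G] ee stab_l by simp
    then show ?thesis using G by (auto simp: Sigma_Ominus_def)
  qed
  have S: "e \<in> Sigma_bar_Ominus" if "e \<in> Sigma_Ominus"
    using that by (auto simp: Sigma_bar_Ominus_def Sigma_Ominus_def)
  show ?thesis using A1 B1 A2 B2 S by blast
qed

end
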